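(* Let $\mathbf{M}=(m_{i,j})$ be a $k\times n$ binary matrix with $k \le n$. For $i\in[k]$ let $R_i=\{j\in[n]: m_{i,j}\neq 0\}$ be the support of row $i$, and for $j\in[n]$ let $C_j=\{i\in[k]: m_{i,j}\neq 0\}$ be the support of column $j$. Then the condition $$\Big|\bigcup_{j\in J} C_j\Big| \ge |J| \quad\text{for every } J\subseteq[n] \text{ with } |J|\le k$$ is equivalent to the condition $$\Big|\bigcup_{i\in I} R_i\Big| \ge n-k+|I| \quad\text{for every nonempty } I\subseteq[k].$$
   Context: $[n]=\{1,\dots,n\}$. *)

theory Defs
  imports Main
begin

text \<open>A k x n matrix is a function m with m i j the (i,j) entry, i in {1..k}, j in {1..n}.\<close>

definition row_support :: "(nat \<Rightarrow> nat \<Rightarrow> nat) \<Rightarrow> nat \<Rightarrow> nat \<Rightarrow> nat set" where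
  "row_support m n i = {j \<in> {1..n}. m i j \<noteq> 0}"

definition col_support :: "(nat \<Rightarrow> nat \<Rightarrow> nat) \<Rightarrow> nat \<Rightarrow> nat \<Rightarrow> nat set" where
  "col_support m k j = {i \<in> {1..k}. m i j \<noteq> 0}"

end

theory Submission
  imports Defs
begin

theorem lemma4:
  fixes m :: "nat \<Rightarrow> nat \<Rightarrow> nat" and k n :: nat
  assumes binary: "\<And>i j. i \<in> {1..k} \<Longrightarrow> j \<in> {1..n} \<Longrightarrow> m i j \<in> {0, 1}"
    and kn: "k \<le> n"
  shows "(\<forall>J. J \<subseteq> {1..n} \<and> card J \<le> k \<longrightarrow>
            card (\<Union>j\<in>J. col_support m k j) \<ge> card J)
     \<longleftrightarrow> (\<forall>I. I \<subseteq> {1..k} \<and> I \<noteq> {} \<longrightarrow>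
            card (\<Union>i\<in>I. row_support m n i) \<ge> n - k + card I)"
proof
  assume A: "\<forall>J. J \<subseteq> {1..n} \<and> card J \<le> k \<longrightarrow>
            card (\<Union>j\<in>J. col_support m k j) \<ge> card J"
  show "\<forall>I. I \<subseteq> {1..k} \<and> I \<noteq> {} \<longrightarrow>
            card (\<Union>i\<in>I. row_support m n i) \<ge> n - k + card I"
  proof (intro allI impI, rule ccontr)
    fix I assume I: "I \<subseteq> {1..k} \<and> I \<noteq> {}"
      and c: "\<not> card (\<Union>i\<in>I. row_support m n i) \<ge> n - k + card I"
    define RI where "RI = (\<Union>i\<in>I. row_support m n i)"
    have RIs: "RI \<subseteq> {1..n}" unfolding RI_def row_support_def by auto
    define J' where "J' = {1..n} - RI"
    have cJ': "card J' = n - card RI" unfolding J'_def using RIs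
      by (simp add: card_Diff_subset finite_subset)
    have fI: "finite I" using I finite_subset by blast
    have cI: "card I \<le> k" using I card_mono[of "{1..k}" I] by auto
    have cI1: "card I \<ge> 1" using I fI by (simp add: Suc_leI card_gt_0_iff)
    have cRI: "card RI \<le> n" using card_mono[OF _ RIs] by simp
    have "card J' \<ge> k - card I + 1" using cJ' c cRI kn cI unfolding RI_def by linarith
    then obtain J where J: "J \<subseteq> J'" "card J = k - card I + 1"
      using obtain_subset_with_card_n by (metis (no_types, lifting) J'_def
          finite_Diff finite_atLeastAtMost obtain_subset_with_card_n)
    have Jn: "J \<subseteq> {1..n}" using J J'_def by auto
    have "card J \<le> k" using J cI1 cI by linarith
    hence A1: "card (\<Union>j\<in>J. col_support m k j) \<ge> card J" using A Jn by blast
    have sub: "(\<Union>j\<in>J. col_support m k j) \<subseteq> {1..k} - I"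
    proof
      fix i assume "i \<in> (\<Union>j\<in>J. col_support m k j)"
      then obtain j where j: "j \<in> J" "i \<in> {1..k}" "m i j \<noteq> 0"
        unfolding col_support_def by auto
      show "i \<in> {1..k} - I"
      proof (rule ccontr)
        assume "i \<notin> {1..k} - I"
        hence "i \<in> I" using j by auto
        hence "j \<in> RI" using j Jn unfolding RI_def row_support_def by auto
        thus False using j J J'_def by auto
      qed
    qed
    have "card (\<Union>j\<in>J. col_support m k j) \<le> card ({1..k} - I)"
      by (rule card_mono[OF _ sub]) simp
    also have "\<dots> = k - card I" using I fI by (simp add: card_Diff_subset)
    finally show False using A1 J by linarith
  qed
next
  assume B: "\<forall>I. I \<subseteq> {1..k} \<and> I \<noteq> {} \<longrightarrow>
            card (\<Union>i\<in>I. row_support m n i) \<ge> n - k + card I"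
  show "\<forall>J. J \<subseteq> {1..n} \<and> card J \<le> k \<longrightarrow>
            card (\<Union>j\<in>J. col_support m k j) \<ge> card J"
  proof (intro allI impI, rule ccontr)
    fix J assume J: "J \<subseteq> {1..n} \<and> card J \<le> k"
      and c: "\<not> card (\<Union>j\<in>J. col_support m k j) \<ge> card J"
    define NJ where "NJ = (\<Union>j\<in>J. col_support m k j)"
    have NJs: "NJ \<subseteq> {1..k}" unfolding NJ_def col_support_def by auto
    define I where "I = {1..k} - NJ"
    have cI: "card I = k - card NJ" unfolding I_def using NJs
      by (simp add: card_Diff_subset finite_subset)
    have fJ: "finite J" using J finite_subset by blast
    have "card I > 0" using cI c J unfolding NJ_def by linarith
    hence Ine: "I \<noteq> {}" by auto
    have "card (\<Union>i\<in>I. row_support m n i) \<ge> n - k + card I"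
      using B Ine I_def by blast
    have sub: "(\<Union>i\<in>I. row_support m n i) \<subseteq> {1..n} - J"
    proof
      fix j assume "j \<in> (\<Union>i\<in>I. row_support m n i)"
      then obtain i where i: "i \<in> I" "j \<in> {1..n}" "m i j \<noteq> 0"
        unfolding row_support_def by auto
      show "j \<in> {1..n} - J"
      proof (rule ccontr)
        assume "j \<notin> {1..n} - J"
        hence "j \<in> J" using i by auto
        hence "i \<in> NJ" using i I_def unfolding NJ_def col_support_def by auto
        thus False using i I_def by auto
      qed
    qed
    have "card (\<Union>i\<in>I. row_support m n i) \<le> card ({1..n} - J)"
      by (rule card_mono[OF _ sub]) simp
    also have "\<dots> = n - card J" using J fJ by (simp add: card_Diff_subset)
    finally show False
      using \<open>card (\<Union>i\<in>I. row_support m n i) \<ge> n - k + card I\<close> cI c J kn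
      unfolding NJ_def by linarith
  qed
qed

end
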